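(* Let $f_1,f_2$ be strongly hyperbolic functions, $a_0>0$, $b_0,c_0\in\mathbb{R}$, $C=\overline{f_{a_0,b_0,c_0}}$ and $p=(\infty,c_0)$. Let $q\in\mathcal{P}$ with $q\notin C$ and $q$ not parallel to $p$. Then there exist $a_1>0$, $b_1,c_1\in\mathbb{R}$ such that $D=\overline{f_{a_1,b_1,c_1}}$ contains $p$ and $q$ and $C\cap D=\{p\}$.
   Context: Identify $\mathbb{S}^1$ with $\mathbb{R}\cup\{\infty\}$, $\mathcal{P}=\mathbb{S}^1\times\mathbb{S}^1$, $\mathbb{R}^+=(0,\infty)$. Two points of $\mathcal{P}$ are parallel if they have the same first coordinate or the same second coordinate. A function $f:\mathbb{R}^+\to\mathbb{R}^+$ is strongly hyperbolic if: (1) $\lim_{x\to0+}f(x)=+\infty$, $\lim_{x\to+\infty}f(x)=0$; (2) $f$ strictly convex; (3) $\lim_{x\to+\infty}f(x+b)/f(x)=1$ for each $b\in\mathbb{R}$; (4) $f$ differentiable; (5) $\ln|f'|$ strictly convex. For $a>0$, $b,c\in\mathbb{R}$: $f_{a,b,c}(x)=af_1(x+b)+c$ for $x>-b$, $f_{a,b,c}(x)=-af_2(-x-b)+c$ for $x<-b$; $\overline{f_{a,b,c}}=\{(x,f_{a,b,c}(x)):x\ne-b\}\cup\{(-b,\infty),(\infty,c)\}$. *)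

theory Defs
  imports "HOL-Analysis.Analysis"
begin

text \<open>The circle S^1 identified with R together with a point at infinity.\<close>
datatype ext = Fin real | Infty

type_synonym point = "ext \<times> ext"

definition parallel :: "point \<Rightarrow> point \<Rightarrow> bool" where
  "parallel p q \<longleftrightarrow> fst p = fst q \<or> snd p = snd q"

definition strictly_convex_on :: "real set \<Rightarrow> (real \<Rightarrow> real) \<Rightarrow> bool" where
  "strictly_convex_on S f \<longleftrightarrow>
     (\<forall>x\<in>S. \<forall>y\<in>S. \<forall>t. x \<noteq> y \<and> 0 < t \<and> t < 1 \<longrightarrow>
        f ((1 - t) * x + t * y) < (1 - t) * f x + t * f y)"

text \<open>Strongly hyperbolic functions R+ -> R+ (only values on (0,oo) matter).\<close>
definition strongly_hyperbolic :: "(real \<Rightarrow> real) \<Rightarrow> bool" where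
  "strongly_hyperbolic f \<longleftrightarrow>
     (\<forall>x>0. f x > 0) \<and>
     filterlim f at_top (at_right 0) \<and>
     (f \<longlongrightarrow> 0) at_top \<and>
     strictly_convex_on {0<..} f \<and>
     (\<forall>b::real. ((\<lambda>x. f (x + b) / f x) \<longlongrightarrow> 1) at_top) \<and>
     (\<forall>x>0. f differentiable at x) \<and>
     strictly_convex_on {0<..} (\<lambda>x. ln \<bar>deriv f x\<bar>)"

definition fabc :: "(real \<Rightarrow> real) \<Rightarrow> (real \<Rightarrow> real) \<Rightarrow> real \<Rightarrow> real \<Rightarrow> real \<Rightarrow> real \<Rightarrow> real" where
  "fabc f1 f2 a b c x =
     (if x > - b then a * f1 (x + b) + c else - a * f2 (- x - b) + c)"

definition fabc_closure :: "(real \<Rightarrow> real) \<Rightarrow> (real \<Rightarrow> real) \<Rightarrow> real \<Rightarrow> real \<Rightarrow> real \<Rightarrow> point set" where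
  "fabc_closure f1 f2 a b c =
     {(Fin x, Fin (fabc f1 f2 a b c x)) | x. x \<noteq> - b} \<union> {(Fin (- b), Infty), (Infty, Fin c)}"

end

theory Submission
  imports Defs
begin

lemma sh_dec:
  assumes "strongly_hyperbolic f" "0 < s" "s < t"
  shows "f t < f s"
proof (rule ccontr)
  assume "\<not> f t < f s"
  hence fs: "f s \<le> f t" by simp
  have pos: "f t > 0" using assms unfolding strongly_hyperbolic_def by auto
  have cv: "strictly_convex_on {0<..} f" and lim: "(f \<longlongrightarrow> 0) at_top"
    using assms(1) unfolding strongly_hyperbolic_def by auto
  have big: "f u > f t" if "u > t" for u
  proof -
    define w where "w = (t - s) / (u - s)"
    have w: "0 < w" "w < 1" using that assms by (auto simp: w_def field_simps)
    have "w * (u - s) = t - s" using that assms by (simp add: w_def)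
    hence tt: "t = (1 - w) * s + w * u" by (simp add: algebra_simps)
    have "s \<in> {0<..}" "u \<in> {0<..}" "s \<noteq> u" using assms that by auto
    hence "f ((1 - w) * s + w * u) < (1 - w) * f s + w * f u"
      using cv w unfolding strictly_convex_on_def by blast
    hence "f t < (1 - w) * f s + w * f u" using tt by simp
    moreover have "(1 - w) * f s \<le> (1 - w) * f t" using fs w by (simp add: mult_left_mono)
    ultimately have "f t < (1 - w) * f t + w * f u" by linarith
    hence "w * f t < w * f u" by (simp add: algebra_simps)
    thus ?thesis using w by simp
  qed
  have e3: "\<forall>\<^sub>F u in at_top. f u < f t"
    using lim pos order_tendstoD(2) by blast
  have e4: "\<forall>\<^sub>F u in at_top. u > t" by (rule eventually_gt_at_top)
  have "\<forall>\<^sub>F u in at_top. f u < f t \<and> u > t" using eventually_conj[OF e3 e4] .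
  moreover have "(at_top :: real filter) \<noteq> bot" using trivial_limit_at_top_linorder by blast
  ultimately obtain u where "f u < f t" "u > t" using eventually_happens' by blast
  thus False using big by fastforce
qed

lemma sh_surj:
  assumes "strongly_hyperbolic f" "v > 0"
  shows "\<exists>t>0. f t = v"
proof -
  have lim0: "filterlim f at_top (at_right 0)" and lim: "(f \<longlongrightarrow> 0) at_top"
    and dif: "\<forall>x>0. f differentiable at x"
    using assms(1) unfolding strongly_hyperbolic_def by auto
  have e1: "\<forall>\<^sub>F x in at_right 0. v < f x" using lim0 unfolding filterlim_at_top_dense by blast
  have e2: "\<forall>\<^sub>F x in at_right (0::real). x > 0" by (simp add: eventually_at_right_less)
  have "\<forall>\<^sub>F x in at_right (0::real). x > 0 \<and> v < f x" using eventually_conj[OF e2 e1] .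
  moreover have "at_right (0::real) \<noteq> bot" using trivial_limit_at_right_real by blast
  ultimately obtain s where s: "s > 0" "v < f s"
    using eventually_happens' by blast
  have e3: "\<forall>\<^sub>F u in at_top. f u < v" using lim assms(2) order_tendstoD(2) by blast
  have e4: "\<forall>\<^sub>F u in at_top. u > s" by (rule eventually_gt_at_top)
  have "\<forall>\<^sub>F u in at_top. f u < v \<and> u > s" using eventually_conj[OF e3 e4] .
  moreover have "(at_top :: real filter) \<noteq> bot" using trivial_limit_at_top_linorder by blast
  ultimately obtain u where u: "f u < v" "u > s" using eventually_happens' by blast
  have cont: "\<forall>x. s \<le> x \<and> x \<le> u \<longrightarrow> isCont f x"
  proof (intro allI impI)
    fix x assume "s \<le> x \<and> x \<le> u"
    hence "f differentiable at x" using dif s by auto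
    thus "isCont f x" using differentiable_imp_continuous_within[of f x UNIV] by simp
  qed
  have "\<exists>x. s \<le> x \<and> x \<le> u \<and> f x = v"
  proof -
    have "f u \<le> v" "v \<le> f s" "s \<le> u" using u s by auto
    from IVT2[OF this cont] show ?thesis .
  qed
  then obtain x where "s \<le> x" "f x = v" by blast
  thus ?thesis using s(1) by (intro exI[of _ x]) auto
qed

lemma key:
  assumes h1: "strongly_hyperbolic f1" and h2: "strongly_hyperbolic f2"
    and a: "a > 0" and b: "b0 < b1" and x: "x \<noteq> - b0" "x \<noteq> - b1"
  shows "fabc f1 f2 a b0 c x \<noteq> fabc f1 f2 a b1 c x"
proof -
  have p1: "\<forall>x>0. f1 x > 0" and p2: "\<forall>x>0. f2 x > 0"
    using h1 h2 unfolding strongly_hyperbolic_def by auto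
  consider "x > - b0" | "-b1 < x \<and> x < -b0" | "x < -b1" using x b by linarith
  thus ?thesis
  proof cases
    case 1
    hence "f1 (x + b1) < f1 (x + b0)" using sh_dec[OF h1, of "x+b0" "x+b1"] b by simp
    hence "a * f1 (x + b1) < a * f1 (x + b0)" using a by simp
    thus ?thesis using 1 b unfolding fabc_def by auto
  next
    case 2
    hence "f1 (x + b1) > 0" "f2 (- x - b0) > 0" using p1 p2 by auto
    hence "a * f1 (x + b1) > 0" "a * f2 (- x - b0) > 0" using a by auto
    thus ?thesis using 2 unfolding fabc_def by auto
  next
    case 3
    hence "f2 (- x - b0) < f2 (- x - b1)" using sh_dec[OF h2, of "-x-b1" "-x-b0"] b by simp
    hence "a * f2 (- x - b0) < a * f2 (- x - b1)" using a by simp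
    thus ?thesis using 3 b unfolding fabc_def by auto
  qed
qed

lemma inter:
  assumes h1: "strongly_hyperbolic f1" and h2: "strongly_hyperbolic f2"
    and a: "a > 0" and b: "b0 \<noteq> b1"
  shows "fabc_closure f1 f2 a b0 c \<inter> fabc_closure f1 f2 a b1 c = {(Infty, Fin c)}"
proof -
  have k: "fabc f1 f2 a b0 c x \<noteq> fabc f1 f2 a b1 c x" if "x \<noteq> - b0" "x \<noteq> - b1" for x
  proof (cases "b0 < b1")
    case True thus ?thesis using key[OF h1 h2 a True] that by blast
  next
    case False hence bb: "b1 < b0" using b by simp
    thus ?thesis using key[OF h1 h2 a bb] that by metis
  qed
  show ?thesis using b unfolding fabc_closure_def using k by auto
qed

theorem lemma4p11:
  fixes f1 f2 :: "real \<Rightarrow> real" and a0 b0 c0 :: real and q :: point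
  assumes "strongly_hyperbolic f1" and "strongly_hyperbolic f2"
    and "a0 > 0"
    and "q \<notin> fabc_closure f1 f2 a0 b0 c0"
    and "\<not> parallel q (Infty, Fin c0)"
  shows "\<exists>a1 b1 c1. a1 > 0 \<and>
           (Infty, Fin c0) \<in> fabc_closure f1 f2 a1 b1 c1 \<and>
           q \<in> fabc_closure f1 f2 a1 b1 c1 \<and>
           fabc_closure f1 f2 a0 b0 c0 \<inter> fabc_closure f1 f2 a1 b1 c1 = {(Infty, Fin c0)}"
proof -
  obtain qx qy where q: "q = (qx, qy)" by fastforce
  have "qx \<noteq> Infty" "qy \<noteq> Fin c0" using assms(5) q unfolding parallel_def by auto
  then obtain x where x: "qx = Fin x" by (cases qx) auto
  have ex: "\<exists>b1. b1 \<noteq> b0 \<and> q \<in> fabc_closure f1 f2 a0 b1 c0"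
  proof (cases qy)
    case Infty
    have "q \<in> fabc_closure f1 f2 a0 (-x) c0" using q x Infty unfolding fabc_closure_def by auto
    moreover have "-x \<noteq> b0" using assms(4) q x Infty unfolding fabc_closure_def by auto
    ultimately show ?thesis by blast
  next
    case (Fin y)
    hence yc: "y \<noteq> c0" using \<open>qy \<noteq> Fin c0\<close> by simp
    obtain t where t: "t \<noteq> 0" "fabc f1 f2 a0 (t - x) c0 x = y"
    proof (cases "y > c0")
      case True
      then obtain t where "t > 0" "f1 t = (y - c0) / a0" using sh_surj[OF assms(1), of "(y-c0)/a0"] assms(3) by auto
      thus ?thesis using that[of t] assms(3) unfolding fabc_def by auto
    next
      case False
      hence "c0 > y" using yc by simp
      then obtain s where "s > 0" "f2 s = (c0 - y) / a0" using sh_surj[OF assms(2), of "(c0-y)/a0"] assms(3) by auto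
      thus ?thesis using that[of "-s"] assms(3) unfolding fabc_def by auto
    qed
    have qin: "q \<in> fabc_closure f1 f2 a0 (t - x) c0" using q x Fin t unfolding fabc_closure_def by auto
    moreover have "t - x \<noteq> b0"
    proof
      assume "t - x = b0"
      hence "q \<in> fabc_closure f1 f2 a0 b0 c0" using q x Fin t unfolding fabc_closure_def by auto
      thus False using assms(4) by simp
    qed
    ultimately show ?thesis by blast
  qed
  then obtain b1 where b1: "b1 \<noteq> b0" "q \<in> fabc_closure f1 f2 a0 b1 c0" by blast
  show ?thesis
    apply (rule exI[of _ a0], rule exI[of _ b1], rule exI[of _ c0])
    using assms(3) b1 inter[OF assms(1,2,3) b1(1)[symmetric], of c0]
    by (simp add: fabc_closure_def)
qed

end
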